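(* There exists an absolute constant $C>0$ and, for each $q\in[2,\infty)$, a constant $c_q>0$ such that the following holds. Let $N,n,m\in\mathbb N$, let $w_1,\dots,w_N\ge 0$ be weights with $\sum_{i=1}^N w_i>0$, and let $\{1,\dots,N\}=\bigsqcup_{s=1}^m\Delta_s$ be a partition into $m$ blocks with $N_s=|\Delta_s|$. Assume: 1) $\max_{1\le i\le N}w_i\le (4n)^{-1}\sum_{i=1}^N w_i$; 2) for every $s=1,\dots,m$, $\nu_s:=\dfrac{\sum_{i\in\Delta_s}w_i}{\sum_{i=1}^N w_i}\ge \dfrac{C\log(2m)}{n}$. Let $q\in[2,\infty)$, $h>0$, and let $X=(\mathbb R^N,\|\cdot\|_X)$ be a normed space with $\|x\|_X\ge\max(\|x\|_{\ell^N_{q,w}},\,h\|x\|_\infty)$ for all $x\in\mathbb R^N$. Then $$d_n\Big(\prod_{s=1}^m B_1^{N_s},X\Big)\ge\min\Big(c_q\,\big(n\max_{1\le s\le m}\nu_s\big)^{-1/2}\Big(\sum_{i=1}^N w_i\Big)^{1/q},\ h/2\Big).$$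
   Context: The weighted norm is $\|x\|_{\ell^N_{q,w}}=\left(\sum_{i=1}^N w_i|x_i|^q\right)^{1/q}$ and $\|x\|_\infty=\max_i|x_i|$. The product of octahedra is $\prod_{s=1}^m B_1^{N_s}=\{x\in\mathbb R^N:\sum_{i\in\Delta_s}|x_i|\le 1\ \text{for } s=1,\dots,m\}$. For a normed space $X$ and $K\subset X$, the Kolmogorov $n$-width is $d_n(K,X)=\inf_{Q_n}\sup_{x\in K}\inf_{y\in Q_n}\|x-y\|_X$, the infimum over linear subspaces $Q_n\subset X$ with $\dim Q_n\le n$. *)

theory Defs
  imports "HOL-Analysis.Analysis" "HOL-Library.Function_Algebras"
begin

text \<open>Vectors of R^N are represented as functions nat => real vanishing outside
  the index set {0..<N} (0-based indexing of the coordinates 1..N).\<close>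

definition fscale :: "real \<Rightarrow> (nat \<Rightarrow> real) \<Rightarrow> (nat \<Rightarrow> real)" where
  "fscale c x = (\<lambda>i. c * x i)"

definition RN :: "nat \<Rightarrow> (nat \<Rightarrow> real) set" where
  "RN N = {x. \<forall>i. N \<le> i \<longrightarrow> x i = 0}"

definition is_norm_on :: "nat \<Rightarrow> ((nat \<Rightarrow> real) \<Rightarrow> real) \<Rightarrow> bool" where
  "is_norm_on N nX \<longleftrightarrow>
     (\<forall>x\<in>RN N. nX x = 0 \<longleftrightarrow> x = 0) \<and>
     (\<forall>c. \<forall>x\<in>RN N. nX (fscale c x) = \<bar>c\<bar> * nX x) \<and>
     (\<forall>x\<in>RN N. \<forall>y\<in>RN N. nX (x + y) \<le> nX x + nX y)"

definition wnorm :: "real \<Rightarrow> (nat \<Rightarrow> real) \<Rightarrow> nat \<Rightarrow> (nat \<Rightarrow> real) \<Rightarrow> real" where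
  "wnorm q w N x = (\<Sum>i<N. w i * \<bar>x i\<bar> powr q) powr (1 / q)"

definition supnorm :: "nat \<Rightarrow> (nat \<Rightarrow> real) \<Rightarrow> real" where
  "supnorm N x = Max ((\<lambda>i. \<bar>x i\<bar>) ` {..<N})"

definition octa_prod :: "nat \<Rightarrow> nat \<Rightarrow> (nat \<Rightarrow> nat set) \<Rightarrow> (nat \<Rightarrow> real) set" where
  "octa_prod N m \<Delta> = {x \<in> RN N. \<forall>s\<in>{1..m}. (\<Sum>i\<in>\<Delta> s. \<bar>x i\<bar>) \<le> 1}"

definition kolmogorov_width ::
  "nat \<Rightarrow> ((nat \<Rightarrow> real) \<Rightarrow> real) \<Rightarrow> (nat \<Rightarrow> real) set \<Rightarrow> nat \<Rightarrow> real" where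
  "kolmogorov_width N nX K n =
     Inf {Sup ((\<lambda>x. Inf ((\<lambda>y. nX (x - y)) ` Q)) ` K) | Q.
            Q \<subseteq> RN N \<and> module.subspace fscale Q \<and> vector_space.dim fscale Q \<le> n}"

end

theory Submission
  imports Defs
begin


lemma fscale_apply[simp]: "fscale c x i = c * x i" by (simp add: fscale_def)

interpretation fs: vector_space fscale
  by unfold_locales (auto simp: fscale_def algebra_simps)

lemma sum_fun_apply: "(\<Sum>a\<in>A. f a) i = (\<Sum>a\<in>A. (f a i :: real))"
  by (induction A rule: infinite_finite_induct) auto

definition ev :: "nat \<Rightarrow> nat \<Rightarrow> real" where "ev j = (\<lambda>i. if i = j then 1 else 0)"

lemma RN_span: "RN N \<subseteq> fs.span (ev ` {..<N})"
proof
  fix x assume x: "x \<in> RN N"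
  have "x = (\<Sum>j<N. fscale (x j) (ev j))"
  proof
    fix i show "x i = (\<Sum>j<N. fscale (x j) (ev j)) i"
      using x by (cases "i < N") (auto simp: sum_fun_apply ev_def RN_def if_distrib cong: if_cong)
  qed
  also have "\<dots> \<in> fs.span (ev ` {..<N})"
    by (intro fs.span_sum fs.span_scale fs.span_base) auto
  finally show "x \<in> fs.span (ev ` {..<N})" .
qed

lemma dim_basis:
  assumes "Q \<subseteq> RN N" "fs.dim Q \<le> n"
  obtains B where "finite B" "card B \<le> n" "B \<subseteq> Q"
    "\<And>y. y \<in> Q \<Longrightarrow> \<exists>u. y = (\<Sum>b\<in>B. fscale (u b) b)"
proof -
  obtain B where B: "B \<subseteq> Q" "fs.independent B" "Q \<subseteq> fs.span B" "card B = fs.dim Q"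
    using fs.basis_exists by blast
  have "finite B" using fs.independent_span_bound[of "ev ` {..<N}" B] B assms RN_span by blast
  then show ?thesis using that[of B] B assms fs.span_finite[of B] by auto
qed



definition ip :: "'r set \<Rightarrow> ('r \<Rightarrow> real) \<Rightarrow> ('r \<Rightarrow> real) \<Rightarrow> ('r \<Rightarrow> real) \<Rightarrow> real" where
  "ip R \<mu> f g = (\<Sum>r\<in>R. \<mu> r * f r * g r)"

lemma ip_sym: "ip R \<mu> f g = ip R \<mu> g f"
  unfolding ip_def by (simp add: ac_simps)

lemma ip_null: "\<forall>r\<in>R. \<mu> r * e r = 0 \<Longrightarrow> ip R \<mu> e f = 0"
  unfolding ip_def by (rule sum.neutral) auto

lemma ip_nonneg: "\<forall>r\<in>R. \<mu> r \<ge> 0 \<Longrightarrow> ip R \<mu> e e \<ge> 0"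
  unfolding ip_def by (intro sum_nonneg) (simp add: mult.assoc)

lemma ip_zero_null:
  assumes "finite R" "\<forall>r\<in>R. \<mu> r \<ge> 0" "ip R \<mu> e e = 0"
  shows "\<forall>r\<in>R. \<mu> r * e r = 0"
proof
  fix r assume r: "r \<in> R"
  have "\<forall>r\<in>R. \<mu> r * e r * e r = 0"
    using assms sum_nonneg_eq_0_iff[of R "\<lambda>r. \<mu> r * e r * e r"] unfolding ip_def
    by (simp add: mult.assoc)
  then show "\<mu> r * e r = 0" using r by auto
qed

lemma ip_lin:
  "ip R \<mu> (\<lambda>r. f r - (\<Sum>g\<in>G. c g * g r)) h = ip R \<mu> f h - (\<Sum>g\<in>G. c g * ip R \<mu> g h)"
  unfolding ip_def
  by (simp add: algebra_simps sum_subtractf sum_distrib_left sum_distrib_right sum.swap[of _ G])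

lemma ip_lin2:
  "ip R \<mu> (\<lambda>r. (\<Sum>b\<in>B. u b * P b r)) h = (\<Sum>b\<in>B. u b * ip R \<mu> (P b) h)"
  unfolding ip_def
  by (simp add: algebra_simps sum_distrib_left sum_distrib_right sum.swap[of _ B])

definition orthonormal :: "'r set \<Rightarrow> ('r \<Rightarrow> real) \<Rightarrow> ('r \<Rightarrow> real) set \<Rightarrow> bool" where
  "orthonormal R \<mu> G \<longleftrightarrow> (\<forall>g\<in>G. \<forall>g'\<in>G. ip R \<mu> g g' = (if g = g' then 1 else 0))"

lemma sum_ortho: "orthonormal R \<mu> G \<Longrightarrow> g' \<in> G \<Longrightarrow> finite G \<Longrightarrow>
   (\<Sum>g\<in>G. c g * ip R \<mu> g g') = c g'"
proof -
  assume G: "orthonormal R \<mu> G" "g' \<in> G" "finite G"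
  have "(\<Sum>g\<in>G. c g * ip R \<mu> g g') = (\<Sum>g\<in>G. if g = g' then c g else 0)"
    using G unfolding orthonormal_def by (intro sum.cong) auto
  also have "\<dots> = c g'" using G by (simp add: sum.delta')
  finally show ?thesis .
qed

lemma gram_schmidt:
  assumes R: "finite R" and mu: "\<forall>r\<in>R. \<mu> r \<ge> 0" and B: "finite B"
  shows "\<exists>G. finite G \<and> card G \<le> card B \<and> orthonormal R \<mu> G \<and>
     (\<forall>b\<in>B. \<forall>r\<in>R. \<mu> r * (P b r - (\<Sum>g\<in>G. ip R \<mu> (P b) g * g r)) = 0)"
  using B
proof (induction B rule: finite_induct)
  case empty
  show ?case by (rule exI[of _ "{}"]) (auto simp: orthonormal_def)
next
  case (insert b B)
  then obtain G where G: "finite G" "card G \<le> card B" "orthonormal R \<mu> G"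
    "\<forall>b\<in>B. \<forall>r\<in>R. \<mu> r * (P b r - (\<Sum>g\<in>G. ip R \<mu> (P b) g * g r)) = 0" by blast
  define d where "d = (\<lambda>r. P b r - (\<Sum>g\<in>G. ip R \<mu> (P b) g * g r))"
  have dG: "ip R \<mu> d g' = 0" if "g' \<in> G" for g'
    unfolding d_def ip_lin using sum_ortho[OF G(3) that G(1)] by simp
  have cardB: "card (insert b B) = card B + 1" using insert by simp
  show ?case
  proof (cases "ip R \<mu> d d = 0")
    case True
    have "\<forall>r\<in>R. \<mu> r * d r = 0" using ip_zero_null[OF R mu True] .
    then show ?thesis using G cardB unfolding d_def
      by (intro exI[of _ G]) auto
  next
    case False
    define \<sigma> where "\<sigma> = sqrt (ip R \<mu> d d)"
    have dpos: "ip R \<mu> d d > 0" using False ip_nonneg[OF mu, of d] by linarith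
    then have sig: "\<sigma> > 0" "\<sigma> * \<sigma> = ip R \<mu> d d" unfolding \<sigma>_def by (auto simp: real_sqrt_mult[symmetric])
    define g0 where "g0 = (\<lambda>r. d r / \<sigma>)"
    have ipg0: "ip R \<mu> g0 h = ip R \<mu> d h / \<sigma>" for h
      unfolding g0_def ip_def by (simp add: sum_divide_distrib)
    have g0G: "ip R \<mu> g0 g' = 0" if "g' \<in> G" for g'
      using ipg0 dG[OF that] by simp
    have g0g0: "ip R \<mu> g0 g0 = 1"
      using ipg0[of g0] ip_sym[of R \<mu> d g0] ipg0[of d] sig dpos by (simp add: field_simps)
    have g0notin: "g0 \<notin> G" using g0G g0g0 by force
    have ortho: "orthonormal R \<mu> (insert g0 G)"
      unfolding orthonormal_def
    proof (intro ballI)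
      fix g g' assume "g \<in> insert g0 G" "g' \<in> insert g0 G"
      then consider "g = g0" "g' = g0" | "g = g0" "g' \<in> G" | "g \<in> G" "g' = g0" | "g \<in> G" "g' \<in> G"
        by blast
      then show "ip R \<mu> g g' = (if g = g' then 1 else 0)"
      proof cases
        case 1 then show ?thesis using g0g0 by simp
      next
        case 2 then show ?thesis using g0G g0notin by auto
      next
        case 3 then show ?thesis using g0G g0notin ip_sym[of R \<mu> g g0] by auto
      next
        case 4 then show ?thesis using G(3) unfolding orthonormal_def by blast
      qed
    qed
    have Pbg0: "ip R \<mu> (P b) g0 = \<sigma>"
    proof -
      have "ip R \<mu> d g0 = ip R \<mu> (P b) g0 - (\<Sum>g\<in>G. ip R \<mu> (P b) g * ip R \<mu> g g0)"
        unfolding d_def ip_lin by simp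
      moreover have "(\<Sum>g\<in>G. ip R \<mu> (P b) g * ip R \<mu> g g0) = 0"
        using g0G ip_sym[of R \<mu> _ g0] by (intro sum.neutral) auto
      moreover have "ip R \<mu> d g0 = \<sigma>"
      proof -
        have "ip R \<mu> d g0 = ip R \<mu> d d / \<sigma>" using ipg0[of d] ip_sym[of R \<mu> d g0] by simp
        also have "\<dots> = \<sigma>" using sig by (simp flip: sig(2))
        finally show ?thesis .
      qed
      ultimately show ?thesis by simp
    qed
    have res_b: "\<forall>r\<in>R. \<mu> r * (P b r - (\<Sum>g\<in>insert g0 G. ip R \<mu> (P b) g * g r)) = 0"
    proof
      fix r
      have "(\<Sum>g\<in>insert g0 G. ip R \<mu> (P b) g * g r) = ip R \<mu> (P b) g0 * g0 r + (\<Sum>g\<in>G. ip R \<mu> (P b) g * g r)"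
        using sum.insert[OF G(1) g0notin] by blast
      also have "ip R \<mu> (P b) g0 * g0 r = d r" using Pbg0 sig(1) unfolding g0_def by simp
      finally show "\<mu> r * (P b r - (\<Sum>g\<in>insert g0 G. ip R \<mu> (P b) g * g r)) = 0"
        unfolding d_def by simp
    qed
    have res_B: "\<forall>r\<in>R. \<mu> r * (P b' r - (\<Sum>g\<in>insert g0 G. ip R \<mu> (P b') g * g r)) = 0"
      if b': "b' \<in> B" for b'
    proof -
      define e where "e = (\<lambda>r. P b' r - (\<Sum>g\<in>G. ip R \<mu> (P b') g * g r))"
      have en: "\<forall>r\<in>R. \<mu> r * e r = 0" using G(4) b' unfolding e_def by blast
      have "ip R \<mu> e g0 = ip R \<mu> (P b') g0 - (\<Sum>g\<in>G. ip R \<mu> (P b') g * ip R \<mu> g g0)"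
        unfolding e_def ip_lin by simp
      moreover have "(\<Sum>g\<in>G. ip R \<mu> (P b') g * ip R \<mu> g g0) = 0"
        using g0G ip_sym[of R \<mu> _ g0] by (intro sum.neutral) auto
      moreover have "ip R \<mu> e g0 = 0" using ip_null[OF en] .
      ultimately have "ip R \<mu> (P b') g0 = 0" by simp
      then show ?thesis using en sum.insert[OF G(1) g0notin, of "\<lambda>g. ip R \<mu> (P b') g * g _"]
        unfolding e_def by simp
    qed
    show ?thesis
    proof (intro exI[of _ "insert g0 G"] conjI)
      show "finite (insert g0 G)" using G(1) by simp
      show "card (insert g0 G) \<le> card (insert b B)" using G(1,2) g0notin cardB by simp
      show "orthonormal R \<mu> (insert g0 G)" by (rule ortho)
      show "\<forall>b'\<in>insert b B. \<forall>r\<in>R. \<mu> r * (P b' r - (\<Sum>g\<in>insert g0 G. ip R \<mu> (P b') g * g r)) = 0"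
        using res_b res_B by blast
    qed
  qed
qed

lemma wCS:
  assumes "\<forall>r\<in>R. \<mu> r \<ge> (0::real)"
  shows "(\<Sum>r\<in>R. \<mu> r * a r * b r)\<^sup>2 \<le> (\<Sum>r\<in>R. \<mu> r * (a r)\<^sup>2) * (\<Sum>r\<in>R. \<mu> r * (b r)\<^sup>2)"
proof -
  have e1: "(\<Sum>r\<in>R. \<mu> r * a r * b r) = (\<Sum>r\<in>R. (sqrt (\<mu> r) * a r) * (sqrt (\<mu> r) * b r))"
    using assms by (intro sum.cong) (auto simp: algebra_simps real_sqrt_mult[symmetric])
  have e2: "(\<Sum>r\<in>R. \<mu> r * (a r)\<^sup>2) = (\<Sum>r\<in>R. (sqrt (\<mu> r) * a r)\<^sup>2)"
    using assms by (intro sum.cong) (auto simp: power_mult_distrib)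
  have e3: "(\<Sum>r\<in>R. \<mu> r * (b r)\<^sup>2) = (\<Sum>r\<in>R. (sqrt (\<mu> r) * b r)\<^sup>2)"
    using assms by (intro sum.cong) (auto simp: power_mult_distrib)
  show ?thesis unfolding e1 e2 e3 by (rule Cauchy_Schwarz_ineq_sum)
qed

lemma trace_bound:
  assumes R: "finite R" and mu: "\<forall>r\<in>R. \<mu> r \<ge> 0" and B: "finite B" and cB: "card B \<le> n"
    and Y: "\<forall>r'\<in>R. \<exists>u. \<forall>r\<in>R. Y r' r = (\<Sum>b\<in>B. u b * P b r)"
  shows "(\<Sum>r\<in>R. \<mu> r * Y r r)\<^sup>2 \<le> real n * (\<Sum>r'\<in>R. \<mu> r' * ip R \<mu> (Y r') (Y r'))"
proof -
  obtain G where G: "finite G" "card G \<le> card B" "orthonormal R \<mu> G"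
    "\<forall>b\<in>B. \<forall>r\<in>R. \<mu> r * (P b r - (\<Sum>g\<in>G. ip R \<mu> (P b) g * g r)) = 0"
    using gram_schmidt[OF R mu B, of P] by blast
  have resY: "\<mu> r * Y r' r = \<mu> r * (\<Sum>g\<in>G. ip R \<mu> (Y r') g * g r)" if r': "r' \<in> R" and r: "r \<in> R" for r' r
  proof -
    obtain u where u: "\<forall>r\<in>R. Y r' r = (\<Sum>b\<in>B. u b * P b r)" using Y r' by blast
    have ipY: "ip R \<mu> (Y r') g = (\<Sum>b\<in>B. u b * ip R \<mu> (P b) g)" for g
    proof -
      have "ip R \<mu> (Y r') g = ip R \<mu> (\<lambda>r. \<Sum>b\<in>B. u b * P b r) g"
        unfolding ip_def using u by (intro sum.cong) auto
      then show ?thesis by (simp add: ip_lin2)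
    qed
    have "\<mu> r * (Y r' r - (\<Sum>g\<in>G. ip R \<mu> (Y r') g * g r))
       = (\<Sum>b\<in>B. u b * (\<mu> r * (P b r - (\<Sum>g\<in>G. ip R \<mu> (P b) g * g r))))"
      unfolding ipY u[rule_format, OF r]
      by (simp add: algebra_simps sum_subtractf sum_distrib_left sum_distrib_right sum.swap[of _ G])
    also have "\<dots> = 0" using G(4) r by (intro sum.neutral) simp
    finally show ?thesis by (simp add: algebra_simps)
  qed
  define \<beta> where "\<beta> g = (\<Sum>r\<in>R. \<mu> r * ip R \<mu> (Y r) g * g r)" for g
  define \<alpha> where "\<alpha> g = (\<Sum>r\<in>R. \<mu> r * (ip R \<mu> (Y r) g)\<^sup>2)" for g
  have T: "(\<Sum>r\<in>R. \<mu> r * Y r r) = (\<Sum>g\<in>G. \<beta> g)"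
  proof -
    have "(\<Sum>r\<in>R. \<mu> r * Y r r) = (\<Sum>r\<in>R. \<mu> r * (\<Sum>g\<in>G. ip R \<mu> (Y r) g * g r))"
      using resY by (intro sum.cong) auto
    also have "\<dots> = (\<Sum>g\<in>G. \<beta> g)"
      unfolding \<beta>_def by (simp add: sum_distrib_left sum.swap[of _ G] mult.assoc)
    finally show ?thesis .
  qed
  have ba: "(\<beta> g)\<^sup>2 \<le> \<alpha> g" if g: "g \<in> G" for g
  proof -
    have "(\<beta> g)\<^sup>2 \<le> \<alpha> g * (\<Sum>r\<in>R. \<mu> r * (g r)\<^sup>2)"
      unfolding \<beta>_def \<alpha>_def by (rule wCS[OF mu])
    moreover have "(\<Sum>r\<in>R. \<mu> r * (g r)\<^sup>2) = 1"
      using G(3) g unfolding orthonormal_def ip_def by (auto simp: power2_eq_square mult.assoc)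
    ultimately show ?thesis by simp
  qed
  have bessel: "(\<Sum>g\<in>G. (ip R \<mu> (Y r) g)\<^sup>2) = ip R \<mu> (Y r) (Y r)" if r: "r \<in> R" for r
  proof -
    have "ip R \<mu> (Y r) (Y r) = (\<Sum>r0\<in>R. (\<mu> r0 * Y r r0) * Y r r0)"
      unfolding ip_def by simp
    also have "\<dots> = (\<Sum>r0\<in>R. (\<mu> r0 * (\<Sum>g\<in>G. ip R \<mu> (Y r) g * g r0)) * Y r r0)"
      using resY[OF r] by (intro sum.cong) auto
    also have "\<dots> = (\<Sum>g\<in>G. ip R \<mu> (Y r) g * ip R \<mu> g (Y r))"
      unfolding ip_def by (simp add: sum_distrib_left sum_distrib_right sum.swap[of _ G] algebra_simps)
    also have "\<dots> = (\<Sum>g\<in>G. (ip R \<mu> (Y r) g)\<^sup>2)"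
      by (simp add: ip_sym[of R \<mu> _ "Y r"] power2_eq_square)
    finally show ?thesis by simp
  qed
  have "(\<Sum>r\<in>R. \<mu> r * Y r r)\<^sup>2 = (\<Sum>g\<in>G. 1 * \<beta> g)\<^sup>2" using T by simp
  also have "\<dots> \<le> (\<Sum>g\<in>G. 1\<^sup>2) * (\<Sum>g\<in>G. (\<beta> g)\<^sup>2)"
    by (rule Cauchy_Schwarz_ineq_sum)
  also have "\<dots> \<le> real n * (\<Sum>g\<in>G. \<alpha> g)"
  proof (rule mult_mono)
    show "(\<Sum>g\<in>G. (1::real)\<^sup>2) \<le> real n" using G(2) cB by simp
    show "(\<Sum>g\<in>G. (\<beta> g)\<^sup>2) \<le> (\<Sum>g\<in>G. \<alpha> g)" using ba by (rule sum_mono)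
  qed (auto intro: sum_nonneg)
  also have "(\<Sum>g\<in>G. \<alpha> g) = (\<Sum>r\<in>R. \<mu> r * ip R \<mu> (Y r) (Y r))"
  proof -
    have "(\<Sum>g\<in>G. \<alpha> g) = (\<Sum>r\<in>R. \<mu> r * (\<Sum>g\<in>G. (ip R \<mu> (Y r) g)\<^sup>2))"
      unfolding \<alpha>_def by (simp add: sum_distrib_left sum.swap[of _ G])
    also have "\<dots> = (\<Sum>r\<in>R. \<mu> r * ip R \<mu> (Y r) (Y r))"
      using bessel by (intro sum.cong) auto
    finally show ?thesis .
  qed
  finally show ?thesis .
qed



lemma young_pt:
  fixes q K x :: real
  assumes q: "q \<ge> 2" and K: "K > 0"
  shows "x\<^sup>2 \<le> K powr (2/q) * ((2/q) * (\<bar>x\<bar> powr q / K) + (1 - 2/q))"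
proof (cases "x = 0")
  case True
  then show ?thesis using q K by (auto intro!: mult_nonneg_nonneg add_nonneg_nonneg)
next
  case False
  have a: "\<bar>x\<bar> powr q / K > 0" using False K by simp
  have "(\<bar>x\<bar> powr q / K) powr (2/q) * 1 powr (1 - 2/q) \<le> (2/q) * (\<bar>x\<bar> powr q / K) + (1 - 2/q) * 1"
    using q a by (intro Youngs_inequality_0) auto
  moreover have "(\<bar>x\<bar> powr q / K) powr (2/q) = x\<^sup>2 / K powr (2/q)"
    using q K False by (simp add: powr_divide powr_powr powr_numeral[symmetric])
  ultimately have "x\<^sup>2 / K powr (2/q) \<le> (2/q) * (\<bar>x\<bar> powr q / K) + (1 - 2/q)" by simp
  then show ?thesis using K by (simp add: divide_le_eq mult.commute)
qed

lemma power_mean: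
  fixes w z :: "'a \<Rightarrow> real"
  assumes q: "q \<ge> 2" and A: "finite A" and w: "\<forall>j\<in>A. w j \<ge> 0" and W: "(\<Sum>j\<in>A. w j) > 0"
  shows "(\<Sum>j\<in>A. w j * (z j)\<^sup>2) \<le> (\<Sum>j\<in>A. w j) * ((\<Sum>j\<in>A. w j * \<bar>z j\<bar> powr q) / (\<Sum>j\<in>A. w j)) powr (2/q)"
proof -
  define W where "W = (\<Sum>j\<in>A. w j)"
  define S where "S = (\<Sum>j\<in>A. w j * \<bar>z j\<bar> powr q)"
  have S0: "S \<ge> 0" unfolding S_def using w by (intro sum_nonneg) auto
  show ?thesis
  proof (cases "S = 0")
    case True
    have "\<forall>j\<in>A. w j * \<bar>z j\<bar> powr q = 0"
      using True A w sum_nonneg_eq_0_iff[of A "\<lambda>j. w j * \<bar>z j\<bar> powr q"] unfolding S_def by auto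
    then have "\<forall>j\<in>A. w j * (z j)\<^sup>2 = 0" by auto
    then have "(\<Sum>j\<in>A. w j * (z j)\<^sup>2) = 0" by (intro sum.neutral) auto
    then show ?thesis using True unfolding S_def by simp
  next
    case False
    define K where "K = S / W"
    have K: "K > 0" using False S0 W unfolding K_def W_def by simp
    have "(\<Sum>j\<in>A. w j * (z j)\<^sup>2) \<le> (\<Sum>j\<in>A. w j * (K powr (2/q) * ((2/q) * (\<bar>z j\<bar> powr q / K) + (1 - 2/q))))"
    proof (rule sum_mono)
      fix j assume j: "j \<in> A"
      show "w j * (z j)\<^sup>2 \<le> w j * (K powr (2/q) * ((2/q) * (\<bar>z j\<bar> powr q / K) + (1 - 2/q)))"
        using mult_left_mono[OF young_pt[OF q K, of "z j"]] w j by blast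
    qed
    also have "\<dots> = (\<Sum>j\<in>A. (K powr (2/q) * (2/q) / K) * (w j * \<bar>z j\<bar> powr q) + (K powr (2/q) * (1 - 2/q)) * w j)"
      by (intro sum.cong) (simp_all add: algebra_simps)
    also have "\<dots> = (K powr (2/q) * (2/q) / K) * S + (K powr (2/q) * (1 - 2/q)) * W"
      unfolding S_def W_def by (simp only: sum.distrib sum_distrib_left)
    also have "S = K * W" unfolding K_def using W unfolding W_def by simp
    also have "(K powr (2/q) * (2/q) / K) * (K * W) + (K powr (2/q) * (1 - 2/q)) * W = K powr (2/q) * W"
      using K by (simp add: algebra_simps)
    finally show ?thesis unfolding K_def S_def W_def by (simp add: mult.commute)
  qed
qed

lemma power_mean2:
  fixes w z :: "'a \<Rightarrow> real"
  assumes q: "q \<ge> 2" and A: "finite A" and w: "\<forall>j\<in>A. w j \<ge> 0" and W: "(\<Sum>j\<in>A. w j) > 0"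
    and t: "(\<Sum>j\<in>A. w j * \<bar>z j\<bar> powr q) powr (1/q) \<le> t"
  shows "(\<Sum>j\<in>A. w j * (z j)\<^sup>2) \<le> (\<Sum>j\<in>A. w j) * t\<^sup>2 / (\<Sum>j\<in>A. w j) powr (2/q)"
proof -
  define W where "W = (\<Sum>j\<in>A. w j)"
  define S where "S = (\<Sum>j\<in>A. w j * \<bar>z j\<bar> powr q)"
  have S0: "S \<ge> 0" unfolding S_def using w by (intro sum_nonneg) auto
  have t0: "t \<ge> 0" using t powr_ge_zero[of S "1/q"] unfolding S_def by linarith
  have tS: "S powr (1/q) \<le> t" using t unfolding S_def .
  have "S = S powr 1" using S0 by simp
  also have "1 = (1/q) * q" using q by simp
  also have "S powr ((1/q) * q) = (S powr (1/q)) powr q" by (rule powr_powr[symmetric])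
  also have "\<dots> \<le> t powr q" by (rule powr_mono2) (use q tS in auto)
  finally have St: "S \<le> t powr q" .
  have "(\<Sum>j\<in>A. w j * (z j)\<^sup>2) \<le> W * (S / W) powr (2/q)"
    using power_mean[OF q A w W, of z] unfolding S_def W_def .
  also have "(S / W) powr (2/q) \<le> (t powr q / W) powr (2/q)"
  proof (rule powr_mono2)
    show "0 \<le> 2/q" using q by simp
    show "0 \<le> S / W" using S0 W unfolding W_def by simp
    show "S / W \<le> t powr q / W" using St W unfolding W_def by (intro divide_right_mono) auto
  qed
  also have "(t powr q / W) powr (2/q) = t\<^sup>2 / W powr (2/q)"
  proof -
    have "(t powr q / W) powr (2/q) = (t powr q) powr (2/q) / W powr (2/q)" by (rule powr_divide)
    also have "(t powr q) powr (2/q) = t powr (q * (2/q))" by (rule powr_powr)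
    also have "q * (2/q) = 2" using q by simp
    also have "t powr 2 = t\<^sup>2" using t0 by simp
    finally show ?thesis .
  qed
  finally show ?thesis using W unfolding W_def by (simp add: mult_left_mono)
qed



lemma sum_pm1: "finite A \<Longrightarrow> (\<Sum>p\<in>A \<times> {-1, 1::real}. F p) = (\<Sum>i\<in>A. F (i, -1) + F (i, 1))"
proof -
  assume A: "finite A"
  have "(\<Sum>i\<in>A. \<Sum>e\<in>{-1,1::real}. F (i,e)) = (\<Sum>(i,e)\<in>A \<times> {-1,1}. F (i,e))"
    by (rule sum.cartesian_product)
  then show ?thesis by simp
qed

lemma prod_delta_mult:
  assumes "finite A" "s \<in> A"
  shows "(\<Prod>a\<in>A. F a * (if a = s then h else 1)) = (\<Prod>a\<in>A. F a) * (h::real)"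
  using assms by (simp add: prod.distrib prod.delta)

lemma pie_marg:
  fixes f :: "'a \<Rightarrow> 'b \<Rightarrow> real"
  assumes A: "finite A" and B: "\<forall>a\<in>A. finite (B a)" and s: "s \<in> A"
  shows "(\<Sum>g\<in>PiE A B. (\<Prod>a\<in>A. f a (g a)) * h (g s))
     = (\<Sum>p\<in>B s. f s p * h p) * (\<Prod>a\<in>A-{s}. \<Sum>p\<in>B a. f a p)"
proof -
  define F where "F a p = f a p * (if a = s then h p else 1)" for a p
  have "(\<Sum>g\<in>PiE A B. (\<Prod>a\<in>A. f a (g a)) * h (g s)) = (\<Sum>g\<in>PiE A B. \<Prod>a\<in>A. F a (g a))"
  proof (intro sum.cong refl)
    fix g
    have "(\<Prod>a\<in>A. F a (g a)) = (\<Prod>a\<in>A. f a (g a) * (if a = s then h (g s) else 1))"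
      unfolding F_def by (intro prod.cong) auto
    also have "\<dots> = (\<Prod>a\<in>A. f a (g a)) * h (g s)" by (rule prod_delta_mult[OF A s])
    finally show "(\<Prod>a\<in>A. f a (g a)) * h (g s) = (\<Prod>a\<in>A. F a (g a))" by simp
  qed
  also have "\<dots> = (\<Prod>a\<in>A. \<Sum>p\<in>B a. F a p)"
    using prod_sum_PiE[OF A, of B F] B by simp
  also have "\<dots> = (\<Sum>p\<in>B s. F s p) * (\<Prod>a\<in>A-{s}. \<Sum>p\<in>B a. F a p)"
    using prod.remove[OF A s] by simp
  also have "(\<Prod>a\<in>A-{s}. \<Sum>p\<in>B a. F a p) = (\<Prod>a\<in>A-{s}. \<Sum>p\<in>B a. f a p)"
    unfolding F_def by (intro prod.cong refl sum.cong) auto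
  finally show ?thesis unfolding F_def by simp
qed

lemma pie_marg2:
  fixes f :: "'a \<Rightarrow> 'b \<Rightarrow> real"
  assumes A: "finite A" and B: "\<forall>a\<in>A. finite (B a)" and s: "s \<in> A" and t: "t \<in> A" and st: "s \<noteq> t"
    and z: "(\<Sum>p\<in>B s. f s p * h p) = 0"
  shows "(\<Sum>g\<in>PiE A B. (\<Prod>a\<in>A. f a (g a)) * h (g s) * k (g t)) = 0"
proof -
  define F where "F a p = f a p * (if a = t then k p else 1)" for a p
  have "(\<Sum>g\<in>PiE A B. (\<Prod>a\<in>A. f a (g a)) * h (g s) * k (g t)) = (\<Sum>g\<in>PiE A B. (\<Prod>a\<in>A. F a (g a)) * h (g s))"
  proof (intro sum.cong refl)
    fix g
    have "(\<Prod>a\<in>A. F a (g a)) = (\<Prod>a\<in>A. f a (g a) * (if a = t then k (g t) else 1))"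
      unfolding F_def by (intro prod.cong) auto
    also have "\<dots> = (\<Prod>a\<in>A. f a (g a)) * k (g t)" by (rule prod_delta_mult[OF A t])
    finally show "(\<Prod>a\<in>A. f a (g a)) * h (g s) * k (g t) = (\<Prod>a\<in>A. F a (g a)) * h (g s)" by simp
  qed
  also have "\<dots> = (\<Sum>p\<in>B s. F s p * h p) * (\<Prod>a\<in>A-{s}. \<Sum>p\<in>B a. F a p)"
    by (rule pie_marg[OF A B s])
  also have "(\<Sum>p\<in>B s. F s p * h p) = 0" using z st unfolding F_def by simp
  finally show ?thesis by simp
qed

lemma pie_total:
  fixes f :: "'a \<Rightarrow> 'b \<Rightarrow> real"
  assumes A: "finite A" and B: "\<forall>a\<in>A. finite (B a)"
  shows "(\<Sum>g\<in>PiE A B. (\<Prod>a\<in>A. f a (g a))) = (\<Prod>a\<in>A. \<Sum>p\<in>B a. f a p)"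
  using prod_sum_PiE[OF A, of B f] B by simp



lemma RN_add: "x \<in> RN N \<Longrightarrow> y \<in> RN N \<Longrightarrow> x + y \<in> RN N" by (simp add: RN_def)
lemma RN_diff: "x \<in> RN N \<Longrightarrow> y \<in> RN N \<Longrightarrow> x - y \<in> RN N" by (simp add: RN_def)
lemma RN_fscale: "x \<in> RN N \<Longrightarrow> fscale c x \<in> RN N" by (simp add: RN_def)
lemma RN_zero: "0 \<in> RN N" by (simp add: RN_def)
lemma ev_RN: "j < N \<Longrightarrow> ev j \<in> RN N" by (simp add: RN_def ev_def)

lemma RN_sum: "finite A \<Longrightarrow> (\<forall>a\<in>A. v a \<in> RN N) \<Longrightarrow> (\<Sum>a\<in>A. v a) \<in> RN N"
  by (induction A rule: finite_induct) (auto intro: RN_add RN_zero)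

lemma RN_expand: "x \<in> RN N \<Longrightarrow> x = (\<Sum>j<N. fscale (x j) (ev j))"
proof
  fix i assume x: "x \<in> RN N"
  show "x i = (\<Sum>j<N. fscale (x j) (ev j)) i"
    using x by (cases "i < N") (auto simp: sum_fun_apply ev_def RN_def if_distrib cong: if_cong)
qed

lemma nX_scale: "is_norm_on N nX \<Longrightarrow> x \<in> RN N \<Longrightarrow> nX (fscale c x) = \<bar>c\<bar> * nX x"
  unfolding is_norm_on_def by blast
lemma nX_tri: "is_norm_on N nX \<Longrightarrow> x \<in> RN N \<Longrightarrow> y \<in> RN N \<Longrightarrow> nX (x + y) \<le> nX x + nX y"
  unfolding is_norm_on_def by blast

lemma nX_zero: "is_norm_on N nX \<Longrightarrow> nX 0 = 0"
  unfolding is_norm_on_def using RN_zero by blast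

lemma nX_nonneg:
  assumes norm: "is_norm_on N nX" and x: "x \<in> RN N"
  shows "nX x \<ge> 0"
proof -
  have e: "x + fscale (-1) x = 0" by (rule ext) simp
  have "nX (x + fscale (-1) x) \<le> nX x + nX (fscale (-1) x)"
    using nX_tri[OF norm x RN_fscale[OF x]] .
  moreover have "nX (fscale (-1) x) = nX x" using nX_scale[OF norm x, of "-1"] by simp
  ultimately show ?thesis using nX_zero[OF norm] e by simp
qed

lemma nX_sum:
  assumes norm: "is_norm_on N nX"
  shows "finite A \<Longrightarrow> (\<forall>a\<in>A. v a \<in> RN N) \<Longrightarrow> nX (\<Sum>a\<in>A. v a) \<le> (\<Sum>a\<in>A. nX (v a))"
proof (induction A rule: finite_induct)
  case empty then show ?case using nX_zero[OF norm] by (simp add: zero_fun_def)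
next
  case (insert a A)
  have va: "v a \<in> RN N" using insert.prems by simp
  have vA: "(\<Sum>a\<in>A. v a) \<in> RN N" using RN_sum[of A v N] insert by simp
  have "nX (v a + (\<Sum>a\<in>A. v a)) \<le> nX (v a) + nX (\<Sum>a\<in>A. v a)"
    by (rule nX_tri[OF norm va vA])
  also have "nX (\<Sum>a\<in>A. v a) \<le> (\<Sum>a\<in>A. nX (v a))" using insert by simp
  finally have "nX (v a + (\<Sum>a\<in>A. v a)) \<le> nX (v a) + (\<Sum>a\<in>A. nX (v a))" by simp
  then show ?case unfolding sum.insert[OF insert(1) insert(2)] .
qed

lemma nX_bound:
  assumes norm: "is_norm_on N nX" and x: "x \<in> RN N" and b: "\<forall>j<N. \<bar>x j\<bar> \<le> 1"
  shows "nX x \<le> (\<Sum>j<N. nX (ev j))"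
proof -
  have "nX x = nX (\<Sum>j<N. fscale (x j) (ev j))" using RN_expand[OF x] by simp
  also have "\<dots> \<le> (\<Sum>j<N. nX (fscale (x j) (ev j)))"
    by (rule nX_sum[OF norm]) (auto intro: RN_fscale ev_RN)
  also have "\<dots> = (\<Sum>j<N. \<bar>x j\<bar> * nX (ev j))"
    using nX_scale[OF norm ev_RN] by (intro sum.cong) auto
  also have "\<dots> \<le> (\<Sum>j<N. nX (ev j))"
    using b nX_nonneg[OF norm ev_RN] by (intro sum_mono) (auto intro: mult_left_le_one_le)
  finally show ?thesis .
qed



lemma key:
  fixes w :: "nat \<Rightarrow> real" and \<Delta> :: "nat \<Rightarrow> nat set" and nX :: "(nat \<Rightarrow> real) \<Rightarrow> real"
  assumes n1: "n \<ge> 1" and w: "\<forall>i<N. w i \<ge> 0" and Wpos: "(\<Sum>i<N. w i) > 0"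
   and Dsub: "\<forall>s\<in>{1..m}. \<Delta> s \<subseteq> {..<N}"
   and Ddisj: "\<forall>s\<in>{1..m}. \<forall>t\<in>{1..m}. s \<noteq> t \<longrightarrow> \<Delta> s \<inter> \<Delta> t = {}"
   and Dun: "(\<Union>s\<in>{1..m}. \<Delta> s) = {..<N}"
   and maxw: "Max (w ` {..<N}) \<le> (\<Sum>i<N. w i) / (4 * real n)"
   and Wbpos: "\<forall>s\<in>{1..m}. (\<Sum>i\<in>\<Delta> s. w i) > 0"
   and q: "q \<ge> 2" and h: "h > 0" and norm: "is_norm_on N nX"
   and dom: "\<forall>x\<in>RN N. nX x \<ge> max (wnorm q w N x) (h * supnorm N x)"
   and Q: "Q \<subseteq> RN N" "fs.dim Q \<le> n"
   and nu: "\<nu> = Max ((\<lambda>s. (\<Sum>i\<in>\<Delta> s. w i) / (\<Sum>i<N. w i)) ` {1..m})"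
   and t01: "t0 \<le> (1/3) * (real n * \<nu>) powr (-1/2) * (\<Sum>i<N. w i) powr (1/q)"
   and t02: "t0 \<le> h/2"
  shows "\<exists>x\<in>octa_prod N m \<Delta>. \<forall>y\<in>Q. nX (x - y) \<ge> t0"
proof (rule ccontr)
  assume "\<not> ?thesis"
  then have ex: "\<forall>x\<in>octa_prod N m \<Delta>. \<exists>y\<in>Q. nX (x - y) < t0" by (auto simp: not_le)
  define S where "S = {1..m}"
  define W where "W = (\<Sum>i<N. w i)"
  define Wb where "Wb s = (\<Sum>i\<in>\<Delta> s. w i)" for s
  define Rw where "Rw = PiE S (\<lambda>s. \<Delta> s \<times> {-1, 1::real})"
  define xg where "xg g = (\<lambda>j. \<Sum>s\<in>S. if fst (g s) = j then snd (g s) else 0)" for g :: "nat \<Rightarrow> nat \<times> real"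
  define f where "f a p = w (fst p) / (2 * Wb a)" for a and p :: "nat \<times> real"
  define \<mu> where "\<mu> g = (\<Prod>a\<in>S. f a (g a))" for g :: "nat \<Rightarrow> nat \<times> real"
  define L where "L g y = (\<Sum>s\<in>S. Wb s * snd (g s) * y (fst (g s)))" for g :: "nat \<Rightarrow> nat \<times> real" and y :: "nat \<Rightarrow> real"
  have finS: "finite S" unfolding S_def by simp
  have finD: "\<forall>s\<in>S. finite (\<Delta> s)" using Dsub unfolding S_def by (meson finite_lessThan finite_subset)
  have finB: "\<forall>s\<in>S. finite (\<Delta> s \<times> {-1, 1::real})" using finD by simp
  have finRw: "finite Rw" unfolding Rw_def using finS finB by (intro finite_PiE) auto
  have gmem: "fst (g s) \<in> \<Delta> s" "snd (g s) \<in> {-1, 1}" if "g \<in> Rw" "s \<in> S" for g s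
    using that unfolding Rw_def by (auto dest!: PiE_mem)
  have blocksum: "(\<Sum>s\<in>S. \<Sum>j\<in>\<Delta> s. F j) = (\<Sum>j<N. F j)" for F :: "nat \<Rightarrow> real"
  proof -
    have "sum F (\<Union>s\<in>S. \<Delta> s) = (\<Sum>s\<in>S. sum F (\<Delta> s))"
      by (rule sum.UNION_disjoint) (use finS finD Ddisj in \<open>auto simp: S_def\<close>)
    then show ?thesis using Dun unfolding S_def by simp
  qed
  have WbS: "(\<Sum>s\<in>S. Wb s) = W"
    unfolding Wb_def W_def by (rule blocksum)
  have Wb_pos: "Wb s > 0" if "s \<in> S" for s using Wbpos that unfolding Wb_def S_def by auto
  have W_pos: "W > 0" using Wpos unfolding W_def .
  have Wb_le: "Wb s \<le> \<nu> * W" if "s \<in> S" for s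
  proof -
    have "Wb s / W \<le> \<nu>"
      unfolding nu Wb_def W_def using that unfolding S_def by (intro Max_ge) auto
    then show ?thesis using W_pos by (simp add: pos_divide_le_eq)
  qed
  have Snonempty: "S \<noteq> {}"
  proof
    assume "S = {}"
    then have "{..<N} = {}" using Dun unfolding S_def by auto
    then have "N = 0" by (metis lessThan_empty_iff)
    then show False using W_pos unfolding W_def by simp
  qed
  have nu_pos: "\<nu> > 0"
  proof -
    obtain s where s: "s \<in> S" using Snonempty by blast
    have "0 < \<nu> * W" using Wb_pos[OF s] Wb_le[OF s] by linarith
    then show ?thesis using W_pos by (simp add: zero_less_mult_iff)
  qed
  have blk: "xg g j = (if fst (g t) = j then snd (g t) else 0)" if g: "g \<in> Rw" and t: "t \<in> S" and j: "j \<in> \<Delta> t" for g t j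
  proof -
    have "xg g j = (if fst (g t) = j then snd (g t) else 0) + (\<Sum>s\<in>S-{t}. if fst (g s) = j then snd (g s) else 0)"
      unfolding xg_def using sum.remove[OF finS t, of "\<lambda>s. if fst (g s) = j then snd (g s) else 0"] by simp
    moreover have "(\<Sum>s\<in>S-{t}. if fst (g s) = j then snd (g s) else 0) = 0"
    proof (rule sum.neutral, rule ballI)
      fix s assume s: "s \<in> S - {t}"
      have "fst (g s) \<in> \<Delta> s" using gmem[OF g] s by blast
      moreover have "\<Delta> s \<inter> \<Delta> t = {}" using Ddisj s t unfolding S_def by blast
      ultimately have "fst (g s) \<noteq> j" using j by blast
      then show "(if fst (g s) = j then snd (g s) else 0) = 0" by simp
    qed
    ultimately show ?thesis by simp
  qed
  have xgK: "xg g \<in> octa_prod N m \<Delta>" if g: "g \<in> Rw" for g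
  proof -
    have "xg g \<in> RN N"
      unfolding RN_def
    proof (intro CollectI allI impI)
      fix j assume j: "N \<le> j"
      have "\<forall>s\<in>S. fst (g s) \<noteq> j"
      proof
        fix s assume s: "s \<in> S"
        have "fst (g s) \<in> \<Delta> s" using gmem[OF g s] by blast
        then have "fst (g s) < N" using Dsub s unfolding S_def by auto
        then show "fst (g s) \<noteq> j" using j by simp
      qed
      then show "xg g j = 0" unfolding xg_def by (intro sum.neutral) auto
    qed
    moreover have "(\<Sum>j\<in>\<Delta> t. \<bar>xg g j\<bar>) \<le> 1" if t: "t \<in> {1..m}" for t
    proof -
      have tS: "t \<in> S" using t unfolding S_def .
      have "(\<Sum>j\<in>\<Delta> t. \<bar>xg g j\<bar>) = (\<Sum>j\<in>\<Delta> t. if fst (g t) = j then \<bar>snd (g t)\<bar> else 0)"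
        using blk[OF g tS] by (intro sum.cong) auto
      also have "\<dots> = \<bar>snd (g t)\<bar>" using gmem[OF g tS] finD tS by (simp add: sum.delta)
      also have "\<dots> = 1" using gmem[OF g tS] by auto
      finally show ?thesis by simp
    qed
    ultimately show ?thesis unfolding octa_prod_def by blast
  qed
  obtain yg where yg: "\<forall>g\<in>Rw. yg g \<in> Q \<and> nX (xg g - yg g) < t0"
  proof -
    have "\<forall>g\<in>Rw. \<exists>y. y \<in> Q \<and> nX (xg g - y) < t0" using ex xgK by blast
    then have "\<exists>yg. \<forall>g\<in>Rw. yg g \<in> Q \<and> nX (xg g - yg g) < t0" by (rule bchoice)
    then show ?thesis using that by blast
  qed
  define z where "z g = xg g - yg g" for g
  have zRN: "z g \<in> RN N" if g: "g \<in> Rw" for g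
  proof -
    have "xg g \<in> RN N" using xgK[OF g] unfolding octa_prod_def by blast
    moreover have "yg g \<in> RN N" using yg g Q by blast
    ultimately show ?thesis unfolding z_def by (rule RN_diff)
  qed
  have f_nonneg: "f a p \<ge> 0" if "a \<in> S" "p \<in> \<Delta> a \<times> {-1, 1}" for a p
  proof -
    have "fst p \<in> \<Delta> a" using that(2) by auto
    then have "fst p < N" using that(1) Dsub unfolding S_def by blast
    then show ?thesis using w Wb_pos[OF that(1)] unfolding f_def by simp
  qed
  have mu_nonneg: "\<forall>g\<in>Rw. \<mu> g \<ge> 0"
  proof
    fix g assume g: "g \<in> Rw"
    show "\<mu> g \<ge> 0" unfolding \<mu>_def
      by (rule prod_nonneg) (use g f_nonneg gmem in \<open>auto simp: mem_Times_iff\<close>)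
  qed
  have fsum: "(\<Sum>p\<in>\<Delta> a \<times> {-1, 1}. f a p) = 1" if a: "a \<in> S" for a
  proof -
    have "(\<Sum>p\<in>\<Delta> a \<times> {-1, 1}. f a p) = (\<Sum>i\<in>\<Delta> a. f a (i, -1) + f a (i, 1))"
      using finD a by (intro sum_pm1) auto
    also have "\<dots> = (\<Sum>i\<in>\<Delta> a. w i) / Wb a"
      unfolding f_def by (simp add: sum_divide_distrib)
    also have "\<dots> = 1" using Wb_pos[OF a] unfolding Wb_def by simp
    finally show ?thesis .
  qed
  have mu_sum: "(\<Sum>g\<in>Rw. \<mu> g) = 1"
  proof -
    have "(\<Sum>g\<in>Rw. \<mu> g) = (\<Prod>a\<in>S. \<Sum>p\<in>\<Delta> a \<times> {-1, 1}. f a p)"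
      unfolding \<mu>_def Rw_def by (rule pie_total[OF finS finB])
    also have "\<dots> = 1" using fsum by simp
    finally show ?thesis .
  qed
  have Rw_ne: "Rw \<noteq> {}" using mu_sum by auto
  have t0pos: "t0 > 0"
  proof -
    obtain g where g: "g \<in> Rw" using Rw_ne by blast
    have "nX (z g) \<ge> 0" by (rule nX_nonneg[OF norm zRN[OF g]])
    then show ?thesis using yg g unfolding z_def by force
  qed
  define a where "a g s = snd (g s) * yg g (fst (g s))" for g s
  have a_bnd: "1/2 \<le> a g s \<and> a g s \<le> 3/2" if g: "g \<in> Rw" and sS: "s \<in> S" for g s
  proof -
    define i where "i = fst (g s)"
    define e where "e = snd (g s)"
    have iD: "i \<in> \<Delta> s" using gmem[OF g sS] unfolding i_def by blast
    have iN: "i < N" using iD Dsub sS unfolding S_def by blast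
    have e: "e = -1 \<or> e = 1" using gmem[OF g sS] unfolding e_def by blast
    have "\<bar>z g i\<bar> \<le> supnorm N (z g)" unfolding supnorm_def using iN by (intro Max_ge) auto
    moreover have "h * supnorm N (z g) \<le> nX (z g)" using dom zRN[OF g] by auto
    moreover have "nX (z g) < t0" using yg g unfolding z_def by blast
    ultimately have "h * \<bar>z g i\<bar> < h / 2" using t02 h
      by (smt (verit, ccfv_SIG) mult_left_mono)
    then have zi: "\<bar>z g i\<bar> < 1/2" using h by simp
    have "xg g i = e" using blk[OF g sS iD] unfolding e_def i_def by simp
    then have "yg g i = e - z g i" unfolding z_def by simp
    then have "a g s = e * (e - z g i)" unfolding a_def i_def e_def by simp
    then show ?thesis using e zi by (auto simp: abs_if split: if_splits)
  qed
  have zsq: "(\<Sum>j<N. w j * (z g j)\<^sup>2) \<le> W / (9 * real n * \<nu>)" if g: "g \<in> Rw" for g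
  proof -
    have "wnorm q w N (z g) \<le> nX (z g)" using dom zRN[OF g] by auto
    also have "nX (z g) < t0" using yg g unfolding z_def by blast
    finally have wn: "(\<Sum>j<N. w j * \<bar>z g j\<bar> powr q) powr (1/q) \<le> t0" unfolding wnorm_def by simp
    have pm: "(\<Sum>j<N. w j * (z g j)\<^sup>2) \<le> W * t0\<^sup>2 / W powr (2/q)"
      using power_mean2[OF q _ _ _ wn] w Wpos unfolding W_def by simp
    define X where "X = (1/3) * (real n * \<nu>) powr (-1/2) * W powr (1/q)"
    have nnu: "real n * \<nu> > 0" using n1 nu_pos by simp
    have "t0\<^sup>2 \<le> X\<^sup>2" using t0pos t01 unfolding X_def W_def by (intro power_mono) auto
    also have "X\<^sup>2 = (1/9) * ((real n * \<nu>) powr (-1/2) * (real n * \<nu>) powr (-1/2)) * (W powr (1/q) * W powr (1/q))"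
      unfolding X_def by (simp add: power2_eq_square)
    also have "(real n * \<nu>) powr (-1/2) * (real n * \<nu>) powr (-1/2) = 1 / (real n * \<nu>)"
      using nnu by (simp add: powr_add[symmetric] powr_minus_divide)
    also have "W powr (1/q) * W powr (1/q) = W powr (2/q)"
      by (simp add: powr_add[symmetric])
    finally have t2: "t0\<^sup>2 \<le> (1/9) * (1 / (real n * \<nu>)) * W powr (2/q)" .
    have Wp: "W powr (2/q) > 0" using W_pos by simp
    have "W * t0\<^sup>2 / W powr (2/q) \<le> W * ((1/9) * (1 / (real n * \<nu>)) * W powr (2/q)) / W powr (2/q)"
      using t2 W_pos Wp by (intro divide_right_mono mult_left_mono) auto
    also have "\<dots> = W / (9 * real n * \<nu>)" using Wp by (simp add: field_simps)
    finally show ?thesis using pm by linarith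
  qed
  have Phi_eq: "(\<Sum>g\<in>Rw. \<mu> g * L g y * L g y) = (\<Sum>s\<in>S. Wb s * (\<Sum>j\<in>\<Delta> s. w j * (y j)\<^sup>2))" for y
  proof -
    define c where "c s p = Wb s * snd p * y (fst p)" for s and p :: "nat \<times> real"
    have Lc: "L g y = (\<Sum>s\<in>S. c s (g s))" for g unfolding L_def c_def by simp
    have "(\<Sum>g\<in>Rw. \<mu> g * L g y * L g y) = (\<Sum>g\<in>Rw. \<Sum>s\<in>S. \<Sum>t\<in>S. \<mu> g * c s (g s) * c t (g t))"
    proof (intro sum.cong refl)
      fix g
      have eq: "L g y * L g y = (\<Sum>s\<in>S. \<Sum>t\<in>S. c s (g s) * c t (g t))" by (simp only: Lc sum_product)
      have "\<mu> g * L g y * L g y = \<mu> g * (L g y * L g y)" by (simp only: mult.assoc)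
      also have "\<dots> = \<mu> g * (\<Sum>s\<in>S. \<Sum>t\<in>S. c s (g s) * c t (g t))" by (simp only: eq)
      also have "\<dots> = (\<Sum>s\<in>S. \<Sum>t\<in>S. \<mu> g * c s (g s) * c t (g t))" by (simp add: sum_distrib_left mult.assoc)
      finally show "\<mu> g * L g y * L g y = (\<Sum>s\<in>S. \<Sum>t\<in>S. \<mu> g * c s (g s) * c t (g t))" .
    qed
    also have "\<dots> = (\<Sum>s\<in>S. \<Sum>t\<in>S. \<Sum>g\<in>Rw. \<mu> g * c s (g s) * c t (g t))"
      by (subst sum.swap) (intro sum.cong refl sum.swap)
    also have "\<dots> = (\<Sum>s\<in>S. \<Sum>t\<in>S. if s = t then Wb s * (\<Sum>j\<in>\<Delta> s. w j * (y j)\<^sup>2) else 0)"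
    proof (intro sum.cong refl)
      fix s t assume sS: "s \<in> S" and tS: "t \<in> S"
      show "(\<Sum>g\<in>Rw. \<mu> g * c s (g s) * c t (g t)) = (if s = t then Wb s * (\<Sum>j\<in>\<Delta> s. w j * (y j)\<^sup>2) else 0)"
      proof (cases "s = t")
        case True
        have "(\<Sum>g\<in>Rw. \<mu> g * c s (g s) * c t (g t)) = (\<Sum>g\<in>PiE S (\<lambda>s. \<Delta> s \<times> {-1, 1}). (\<Prod>a\<in>S. f a (g a)) * (c s (g s) * c s (g s)))"
          unfolding Rw_def \<mu>_def True by (simp add: mult.assoc)
        also have "\<dots> = (\<Sum>p\<in>\<Delta> s \<times> {-1, 1}. f s p * (c s p * c s p)) * (\<Prod>a\<in>S-{s}. \<Sum>p\<in>\<Delta> a \<times> {-1, 1}. f a p)"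
          by (rule pie_marg[OF finS finB sS])
        also have "(\<Prod>a\<in>S-{s}. \<Sum>p\<in>\<Delta> a \<times> {-1, 1}. f a p) = 1" using fsum by simp
        also have "(\<Sum>p\<in>\<Delta> s \<times> {-1, 1}. f s p * (c s p * c s p)) = (\<Sum>i\<in>\<Delta> s. f s (i, -1) * (c s (i, -1) * c s (i, -1)) + f s (i, 1) * (c s (i, 1) * c s (i, 1)))"
          using finD sS by (intro sum_pm1) auto
        also have "\<dots> = (\<Sum>i\<in>\<Delta> s. Wb s * (w i * (y i)\<^sup>2))"
          using Wb_pos[OF sS] unfolding f_def c_def by (intro sum.cong refl) (simp add: field_simps power2_eq_square)
        also have "\<dots> = Wb s * (\<Sum>j\<in>\<Delta> s. w j * (y j)\<^sup>2)" by (simp add: sum_distrib_left)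
        finally show ?thesis using True by simp
      next
        case False
        have "(\<Sum>g\<in>Rw. \<mu> g * c s (g s) * c t (g t)) = (\<Sum>g\<in>PiE S (\<lambda>s. \<Delta> s \<times> {-1, 1}). (\<Prod>a\<in>S. f a (g a)) * c s (g s) * c t (g t))"
          unfolding Rw_def \<mu>_def by simp
        also have "\<dots> = 0"
        proof (rule pie_marg2[OF finS finB sS tS False])
          have "(\<Sum>p\<in>\<Delta> s \<times> {-1, 1}. f s p * c s p) = (\<Sum>i\<in>\<Delta> s. f s (i, -1) * c s (i, -1) + f s (i, 1) * c s (i, 1))"
            using finD sS by (intro sum_pm1) auto
          also have "\<dots> = 0" unfolding f_def c_def by (intro sum.neutral) simp
          finally show "(\<Sum>p\<in>\<Delta> s \<times> {-1, 1}. f s p * c s p) = 0" .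
        qed
        finally show ?thesis using False by simp
      qed
    qed
    also have "\<dots> = (\<Sum>s\<in>S. Wb s * (\<Sum>j\<in>\<Delta> s. w j * (y j)\<^sup>2))"
      using finS by simp
    finally show ?thesis .
  qed
  have blockbnd: "(\<Sum>j\<in>\<Delta> s. w j * (yg g j)\<^sup>2) \<le> w (fst (g s)) * (a g s)\<^sup>2 + (\<Sum>j\<in>\<Delta> s. w j * (z g j)\<^sup>2)"
    if g: "g \<in> Rw" and sS: "s \<in> S" for g s
  proof -
    define i where "i = fst (g s)"
    have iD: "i \<in> \<Delta> s" using gmem[OF g sS] unfolding i_def by blast
    have fD: "finite (\<Delta> s)" using finD sS by blast
    have wD: "\<forall>j\<in>\<Delta> s. w j \<ge> 0" using w Dsub sS unfolding S_def by blast
    have e: "snd (g s) = -1 \<or> snd (g s) = 1" using gmem[OF g sS] by blast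
    have "(\<Sum>j\<in>\<Delta> s. w j * (yg g j)\<^sup>2) = w i * (yg g i)\<^sup>2 + (\<Sum>j\<in>\<Delta> s - {i}. w j * (yg g j)\<^sup>2)"
      using sum.remove[OF fD iD, of "\<lambda>j. w j * (yg g j)\<^sup>2"] by simp
    also have "(yg g i)\<^sup>2 = (a g s)\<^sup>2" unfolding a_def i_def using e by auto
    also have "(\<Sum>j\<in>\<Delta> s - {i}. w j * (yg g j)\<^sup>2) = (\<Sum>j\<in>\<Delta> s - {i}. w j * (z g j)\<^sup>2)"
    proof (rule sum.cong[OF refl])
      fix j assume j: "j \<in> \<Delta> s - {i}"
      have "xg g j = 0" using blk[OF g sS, of j] j unfolding i_def by auto
      then have "yg g j = - z g j" unfolding z_def by simp
      then show "w j * (yg g j)\<^sup>2 = w j * (z g j)\<^sup>2" by simp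
    qed
    also have "(\<Sum>j\<in>\<Delta> s - {i}. w j * (z g j)\<^sup>2) \<le> (\<Sum>j\<in>\<Delta> s. w j * (z g j)\<^sup>2)"
      using fD wD by (intro sum_mono2) auto
    finally show ?thesis unfolding i_def by simp
  qed
  have Lyg: "L g (yg g) = (\<Sum>s\<in>S. Wb s * a g s)" for g
    unfolding L_def a_def by (simp add: mult.assoc)
  have Phibnd: "real n * (\<Sum>g'\<in>Rw. \<mu> g' * L g' (yg g) * L g' (yg g)) \<le> (W/4) * (2 * L g (yg g) - 3/4 * W) + W\<^sup>2 / 9"
    if g: "g \<in> Rw" for g
  proof -
    define Phi where "Phi = (\<Sum>g'\<in>Rw. \<mu> g' * L g' (yg g) * L g' (yg g))"
    define Z where "Z s = (\<Sum>j\<in>\<Delta> s. w j * (z g j)\<^sup>2)" for s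
    have Z0: "Z s \<ge> 0" if "s \<in> S" for s
    proof -
      have "\<forall>j\<in>\<Delta> s. w j \<ge> 0" using w Dsub that unfolding S_def by blast
      then show ?thesis unfolding Z_def by (intro sum_nonneg) auto
    qed
    have wi: "w (fst (g s)) \<le> W / (4 * real n)" if sS: "s \<in> S" for s
    proof -
      have "fst (g s) < N" using gmem[OF g sS] Dsub sS unfolding S_def by blast
      then have "w (fst (g s)) \<le> Max (w ` {..<N})" by (intro Max_ge) auto
      then show ?thesis using maxw unfolding W_def by linarith
    qed
    have per: "Wb s * (\<Sum>j\<in>\<Delta> s. w j * (yg g j)\<^sup>2) \<le> (W / (4 * real n)) * (Wb s * (a g s)\<^sup>2) + (\<nu> * W) * Z s"
      if sS: "s \<in> S" for s
    proof -
      have Wb0: "Wb s \<ge> 0" using Wb_pos[OF sS] by simp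
      have h1: "Wb s * (\<Sum>j\<in>\<Delta> s. w j * (yg g j)\<^sup>2) \<le> Wb s * (w (fst (g s)) * (a g s)\<^sup>2 + Z s)"
        using blockbnd[OF g sS] Wb0 unfolding Z_def by (intro mult_left_mono) auto
      have h2: "Wb s * (w (fst (g s)) * (a g s)\<^sup>2) \<le> Wb s * ((W / (4 * real n)) * (a g s)\<^sup>2)"
        using wi[OF sS] Wb0 by (intro mult_left_mono mult_right_mono) auto
      have h3: "Wb s * Z s \<le> (\<nu> * W) * Z s" using Wb_le[OF sS] Z0[OF sS] by (intro mult_right_mono) auto
      have e1: "Wb s * (w (fst (g s)) * (a g s)\<^sup>2 + Z s) = Wb s * (w (fst (g s)) * (a g s)\<^sup>2) + Wb s * Z s"
        by (simp add: distrib_left)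
      have e2: "Wb s * ((W / (4 * real n)) * (a g s)\<^sup>2) = (W / (4 * real n)) * (Wb s * (a g s)\<^sup>2)" by simp
      show ?thesis using h1 h2 h3 e1 e2 by linarith
    qed
    have "Phi = (\<Sum>s\<in>S. Wb s * (\<Sum>j\<in>\<Delta> s. w j * (yg g j)\<^sup>2))" unfolding Phi_def by (rule Phi_eq)
    also have "\<dots> \<le> (\<Sum>s\<in>S. (W / (4 * real n)) * (Wb s * (a g s)\<^sup>2) + (\<nu> * W) * Z s)"
      using per by (rule sum_mono)
    also have "\<dots> = (W / (4 * real n)) * (\<Sum>s\<in>S. Wb s * (a g s)\<^sup>2) + (\<nu> * W) * (\<Sum>j<N. w j * (z g j)\<^sup>2)"
      unfolding Z_def by (simp only: sum.distrib sum_distrib_left[symmetric] blocksum)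
    finally have A1: "Phi \<le> (W / (4 * real n)) * (\<Sum>s\<in>S. Wb s * (a g s)\<^sup>2) + (\<nu> * W) * (\<Sum>j<N. w j * (z g j)\<^sup>2)" .
    have A2: "(\<Sum>s\<in>S. Wb s * (a g s)\<^sup>2) \<le> 2 * L g (yg g) - 3/4 * W"
    proof -
      have "(\<Sum>s\<in>S. Wb s * (a g s)\<^sup>2) \<le> (\<Sum>s\<in>S. 2 * (Wb s * a g s) - 3/4 * Wb s)"
      proof (rule sum_mono)
        fix s assume sS: "s \<in> S"
        have "0 \<le> (a g s - 1/2) * (3/2 - a g s)" using a_bnd[OF g sS] by (intro mult_nonneg_nonneg) auto
        moreover have "(a g s - 1/2) * (3/2 - a g s) = 2 * a g s - (a g s)\<^sup>2 - 3/4"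
          by (simp add: algebra_simps power2_eq_square)
        ultimately have "(a g s)\<^sup>2 \<le> 2 * a g s - 3/4" by linarith
        then have "Wb s * (a g s)\<^sup>2 \<le> Wb s * (2 * a g s - 3/4)"
          using Wb_pos[OF sS] by (intro mult_left_mono) auto
        then show "Wb s * (a g s)\<^sup>2 \<le> 2 * (Wb s * a g s) - 3/4 * Wb s" by (simp add: algebra_simps)
      qed
      also have "\<dots> = 2 * (\<Sum>s\<in>S. Wb s * a g s) - 3/4 * (\<Sum>s\<in>S. Wb s)"
        by (simp only: sum_subtractf sum_distrib_left[symmetric])
      finally show ?thesis using WbS Lyg by simp
    qed
    have A3: "real n * ((\<nu> * W) * (\<Sum>j<N. w j * (z g j)\<^sup>2)) \<le> W\<^sup>2 / 9"
    proof -
      have "real n * ((\<nu> * W) * (\<Sum>j<N. w j * (z g j)\<^sup>2)) \<le> real n * ((\<nu> * W) * (W / (9 * real n * \<nu>)))"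
        using zsq[OF g] nu_pos W_pos by (intro mult_left_mono) auto
      also have "\<dots> = W\<^sup>2 / 9" using nu_pos n1 by (simp add: field_simps power2_eq_square)
      finally show ?thesis .
    qed
    have A4: "real n * ((W / (4 * real n)) * (\<Sum>s\<in>S. Wb s * (a g s)\<^sup>2)) \<le> (W/4) * (2 * L g (yg g) - 3/4 * W)"
    proof -
      have "real n * ((W / (4 * real n)) * (\<Sum>s\<in>S. Wb s * (a g s)\<^sup>2)) = (W/4) * (\<Sum>s\<in>S. Wb s * (a g s)\<^sup>2)"
        using n1 by simp
      also have "\<dots> \<le> (W/4) * (2 * L g (yg g) - 3/4 * W)" using A2 W_pos by (intro mult_left_mono) auto
      finally show ?thesis .
    qed
    have "real n * Phi \<le> real n * ((W / (4 * real n)) * (\<Sum>s\<in>S. Wb s * (a g s)\<^sup>2) + (\<nu> * W) * (\<Sum>j<N. w j * (z g j)\<^sup>2))"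
      using A1 n1 by (intro mult_left_mono) auto
    also have "\<dots> = real n * ((W / (4 * real n)) * (\<Sum>s\<in>S. Wb s * (a g s)\<^sup>2)) + real n * ((\<nu> * W) * (\<Sum>j<N. w j * (z g j)\<^sup>2))"
      by (simp only: distrib_left)
    finally show ?thesis using A3 A4 unfolding Phi_def by linarith
  qed
  have trace: "(\<Sum>g\<in>Rw. \<mu> g * L g (yg g))\<^sup>2 \<le> real n * (\<Sum>g\<in>Rw. \<mu> g * ip Rw \<mu> (\<lambda>g'. L g' (yg g)) (\<lambda>g'. L g' (yg g)))"
  proof -
    obtain B where B: "finite B" "card B \<le> n" "B \<subseteq> Q"
      "\<And>y. y \<in> Q \<Longrightarrow> \<exists>u. y = (\<Sum>b\<in>B. fscale (u b) b)"
      using dim_basis[OF Q(1) Q(2)] by blast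
    have lin: "\<exists>u. \<forall>r\<in>Rw. L r (yg r') = (\<Sum>b\<in>B. u b * L r b)" if r': "r' \<in> Rw" for r'
    proof -
      obtain u where u: "yg r' = (\<Sum>b\<in>B. fscale (u b) b)" using B(4) yg r' by blast
      have "L r (yg r') = (\<Sum>b\<in>B. u b * L r b)" for r
      proof -
        have "L r (yg r') = (\<Sum>s\<in>S. \<Sum>b\<in>B. u b * (Wb s * snd (r s) * b (fst (r s))))"
          unfolding L_def u by (simp add: sum_fun_apply sum_distrib_left ac_simps)
        also have "\<dots> = (\<Sum>b\<in>B. u b * L r b)"
          unfolding L_def by (subst sum.swap) (simp add: sum_distrib_left)
        finally show ?thesis .
      qed
      then show ?thesis by blast
    qed
    show ?thesis
      using trace_bound[OF finRw mu_nonneg B(1) B(2), of "\<lambda>r' g'. L g' (yg r')" "\<lambda>b g'. L g' b"] lin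
      by simp
  qed
  define T where "T = (\<Sum>g\<in>Rw. \<mu> g * L g (yg g))"
  have "T\<^sup>2 \<le> real n * (\<Sum>g\<in>Rw. \<mu> g * (\<Sum>g'\<in>Rw. \<mu> g' * L g' (yg g) * L g' (yg g)))"
    using trace unfolding T_def ip_def .
  also have "\<dots> = (\<Sum>g\<in>Rw. \<mu> g * (real n * (\<Sum>g'\<in>Rw. \<mu> g' * L g' (yg g) * L g' (yg g))))"
    by (simp add: sum_distrib_left ac_simps)
  also have "\<dots> \<le> (\<Sum>g\<in>Rw. \<mu> g * ((W/4) * (2 * L g (yg g) - 3/4 * W) + W\<^sup>2 / 9))"
    using Phibnd mu_nonneg by (intro sum_mono mult_left_mono) auto
  also have "\<dots> = (\<Sum>g\<in>Rw. (W/2) * (\<mu> g * L g (yg g)) + (W\<^sup>2/9 - 3/16 * W\<^sup>2) * \<mu> g)"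
    by (intro sum.cong refl) (simp add: algebra_simps power2_eq_square)
  also have "\<dots> = (W/2) * T + (W\<^sup>2/9 - 3/16 * W\<^sup>2) * (\<Sum>g\<in>Rw. \<mu> g)"
    unfolding T_def by (simp only: sum.distrib sum_distrib_left[symmetric])
  finally have fin: "T\<^sup>2 \<le> (W/2) * T + (W\<^sup>2/9 - 3/16 * W\<^sup>2)" using mu_sum by simp
  have "0 \<le> (T - W/4)\<^sup>2" by simp
  moreover have "(T - W/4)\<^sup>2 = T\<^sup>2 - (W/2) * T + W\<^sup>2/16" by (simp add: power2_eq_square algebra_simps)
  moreover have "W\<^sup>2 > 0" using W_pos by simp
  ultimately show False using fin by linarith
qed



lemma width_bound:
  fixes w :: "nat \<Rightarrow> real" and \<Delta> :: "nat \<Rightarrow> nat set" and nX :: "(nat \<Rightarrow> real) \<Rightarrow> real"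
  assumes n1: "n \<ge> 1" and w: "\<forall>i<N. w i \<ge> 0" and Wpos: "(\<Sum>i<N. w i) > 0"
   and Dsub: "\<forall>s\<in>{1..m}. \<Delta> s \<subseteq> {..<N}"
   and Ddisj: "\<forall>s\<in>{1..m}. \<forall>t\<in>{1..m}. s \<noteq> t \<longrightarrow> \<Delta> s \<inter> \<Delta> t = {}"
   and Dun: "(\<Union>s\<in>{1..m}. \<Delta> s) = {..<N}"
   and maxw: "Max (w ` {..<N}) \<le> (\<Sum>i<N. w i) / (4 * real n)"
   and Wbpos: "\<forall>s\<in>{1..m}. (\<Sum>i\<in>\<Delta> s. w i) > 0"
   and q: "q \<ge> 2" and h: "h > 0" and norm: "is_norm_on N nX"
   and dom: "\<forall>x\<in>RN N. nX x \<ge> max (wnorm q w N x) (h * supnorm N x)"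
   and nu: "\<nu> = Max ((\<lambda>s. (\<Sum>i\<in>\<Delta> s. w i) / (\<Sum>i<N. w i)) ` {1..m})"
   and t01: "t0 \<le> (1/3) * (real n * \<nu>) powr (-1/2) * (\<Sum>i<N. w i) powr (1/q)"
   and t02: "t0 \<le> h/2"
  shows "kolmogorov_width N nX (octa_prod N m \<Delta>) n \<ge> t0"
  unfolding kolmogorov_width_def
proof (rule cInf_greatest)
  show "{Sup ((\<lambda>x. Inf ((\<lambda>y. nX (x - y)) ` Q)) ` octa_prod N m \<Delta>) |Q.
          Q \<subseteq> RN N \<and> fs.subspace Q \<and> fs.dim Q \<le> n} \<noteq> {}"
  proof -
    have "fs.dim {0::nat\<Rightarrow>real} = card ({}::(nat\<Rightarrow>real) set)"
      using fs.independent_empty by (intro fs.dim_eq_card) (simp_all add: fs.dependent_def)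
    then have "{0} \<subseteq> RN N \<and> fs.subspace {0} \<and> fs.dim {0::nat\<Rightarrow>real} \<le> n"
      using RN_zero by simp
    then show ?thesis by blast
  qed
next
  fix v assume "v \<in> {Sup ((\<lambda>x. Inf ((\<lambda>y. nX (x - y)) ` Q)) ` octa_prod N m \<Delta>) |Q.
          Q \<subseteq> RN N \<and> fs.subspace Q \<and> fs.dim Q \<le> n}"
  then obtain Q where v: "v = Sup ((\<lambda>x. Inf ((\<lambda>y. nX (x - y)) ` Q)) ` octa_prod N m \<Delta>)"
    and Q: "Q \<subseteq> RN N" "fs.subspace Q" "fs.dim Q \<le> n" by blast
  have Q0: "0 \<in> Q" using fs.subspace_0[OF Q(2)] .
  obtain x where xK: "x \<in> octa_prod N m \<Delta>" and xQ: "\<forall>y\<in>Q. nX (x - y) \<ge> t0"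
    using key[OF n1 w Wpos Dsub Ddisj Dun maxw Wbpos q h norm dom Q(1) Q(3) nu t01 t02] by blast
  have bbelow: "bdd_below ((\<lambda>y. nX (x' - y)) ` Q)" if "x' \<in> octa_prod N m \<Delta>" for x'
  proof -
    have "x' \<in> RN N" using that unfolding octa_prod_def by blast
    then have "\<forall>y\<in>Q. 0 \<le> nX (x' - y)" using Q(1) by (auto intro!: nX_nonneg[OF norm] RN_diff)
    then show ?thesis by (auto intro: bdd_belowI2)
  qed
  have t0x: "t0 \<le> Inf ((\<lambda>y. nX (x - y)) ` Q)"
    using Q0 xQ by (intro cInf_greatest) auto
  have bab: "bdd_above ((\<lambda>x. Inf ((\<lambda>y. nX (x - y)) ` Q)) ` octa_prod N m \<Delta>)"
  proof (rule bdd_aboveI2)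
    fix x' assume x': "x' \<in> octa_prod N m \<Delta>"
    have x'RN: "x' \<in> RN N" using x' unfolding octa_prod_def by blast
    have "Inf ((\<lambda>y. nX (x' - y)) ` Q) \<le> nX (x' - 0)"
    proof (rule cInf_lower[OF _ bbelow[OF x']])
      show "nX (x' - 0) \<in> (\<lambda>y. nX (x' - y)) ` Q" using Q0 by (rule imageI)
    qed
    also have "\<dots> \<le> (\<Sum>j<N. nX (ev j))"
    proof -
      have "\<forall>j<N. \<bar>x' j\<bar> \<le> 1"
      proof (intro allI impI)
        fix j assume "j < N"
        then obtain s where s: "s \<in> {1..m}" "j \<in> \<Delta> s" using Dun by blast
        have fin: "finite (\<Delta> s)" using Dsub s(1) by (meson finite_lessThan finite_subset)
        have "\<bar>x' j\<bar> \<le> (\<Sum>i\<in>\<Delta> s. \<bar>x' i\<bar>)" using fin s(2) by (intro member_le_sum) auto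
        also have "\<dots> \<le> 1" using x' s(1) unfolding octa_prod_def by blast
        finally show "\<bar>x' j\<bar> \<le> 1" .
      qed
      then show ?thesis using nX_bound[OF norm x'RN] by simp
    qed
    finally show "Inf ((\<lambda>y. nX (x' - y)) ` Q) \<le> (\<Sum>j<N. nX (ev j))" .
  qed
  show "t0 \<le> v" unfolding v
    using xK t0x bab by (intro cSup_upper2[of "Inf ((\<lambda>y. nX (x - y)) ` Q)"]) auto
qed



lemma final_inst:
  fixes w :: "nat \<Rightarrow> real" and \<Delta> :: "nat \<Rightarrow> nat set" and nX :: "(nat \<Rightarrow> real) \<Rightarrow> real"
  assumes n1: "n \<ge> 1" and w: "\<forall>i<N. w i \<ge> 0" and Wpos: "(\<Sum>i<N. w i) > 0"
   and Dsub: "\<forall>s\<in>{1..m}. \<Delta> s \<subseteq> {..<N}"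
   and Ddisj: "\<forall>s\<in>{1..m}. \<forall>t\<in>{1..m}. s \<noteq> t \<longrightarrow> \<Delta> s \<inter> \<Delta> t = {}"
   and Dun: "(\<Union>s\<in>{1..m}. \<Delta> s) = {..<N}"
   and maxw: "Max (w ` {..<N}) \<le> (\<Sum>i<N. w i) / (4 * real n)"
   and nus: "\<forall>s\<in>{1..m}. (\<Sum>i\<in>\<Delta> s. w i) / (\<Sum>i<N. w i) \<ge> 1 * ln (2 * real m) / real n"
   and q: "q \<ge> 2" and h: "h > 0" and norm: "is_norm_on N nX"
   and dom: "\<forall>x\<in>RN N. nX x \<ge> max (wnorm q w N x) (h * supnorm N x)"
  shows "kolmogorov_width N nX (octa_prod N m \<Delta>) n \<ge>
         min (1/3 * (real n * Max ((\<lambda>s. (\<Sum>i\<in>\<Delta> s. w i) / (\<Sum>i<N. w i)) ` {1..m})) powr (-1/2)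
                  * (\<Sum>i<N. w i) powr (1 / q))
             (h / 2)"
proof -
  have m1: "m \<ge> 1"
  proof (rule ccontr)
    assume "\<not> m \<ge> 1"
    then have "m = 0" by simp
    then have "{..<N} = {}" using Dun by simp
    then have "N = 0" by (metis lessThan_empty_iff)
    then show False using Wpos by simp
  qed
  have ln: "ln (2 * real m) > 0" using m1 by simp
  have Wbpos: "\<forall>s\<in>{1..m}. (\<Sum>i\<in>\<Delta> s. w i) > 0"
  proof
    fix s assume s: "s \<in> {1..m}"
    have "1 * ln (2 * real m) / real n > 0" using ln n1 by simp
    then have "(\<Sum>i\<in>\<Delta> s. w i) / (\<Sum>i<N. w i) > 0" using nus s by fastforce
    then show "(\<Sum>i\<in>\<Delta> s. w i) > 0" using Wpos by (simp add: zero_less_divide_iff)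
  qed
  show ?thesis
    by (rule width_bound[OF n1 w Wpos Dsub Ddisj Dun maxw Wbpos q h norm dom refl]) auto
qed

theorem theorem2:
  shows "\<exists>C::real. C > 0 \<and> (\<exists>c::real \<Rightarrow> real. (\<forall>q\<ge>2. c q > 0) \<and>
    (\<forall>(N::nat) (n::nat) (m::nat) (w::nat \<Rightarrow> real) (\<Delta>::nat \<Rightarrow> nat set) (q::real) (h::real)
       (nX::(nat \<Rightarrow> real) \<Rightarrow> real).
       n \<ge> 1 \<longrightarrow>
       (\<forall>i<N. w i \<ge> 0) \<longrightarrow>
       (\<Sum>i<N. w i) > 0 \<longrightarrow>
       (\<forall>s\<in>{1..m}. \<Delta> s \<subseteq> {..<N}) \<longrightarrow>
       (\<forall>s\<in>{1..m}. \<forall>t\<in>{1..m}. s \<noteq> t \<longrightarrow> \<Delta> s \<inter> \<Delta> t = {}) \<longrightarrow>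
       (\<Union>s\<in>{1..m}. \<Delta> s) = {..<N} \<longrightarrow>
       Max (w ` {..<N}) \<le> (\<Sum>i<N. w i) / (4 * real n) \<longrightarrow>
       (\<forall>s\<in>{1..m}. (\<Sum>i\<in>\<Delta> s. w i) / (\<Sum>i<N. w i) \<ge> C * ln (2 * real m) / real n) \<longrightarrow>
       q \<ge> 2 \<longrightarrow> h > 0 \<longrightarrow>
       is_norm_on N nX \<longrightarrow>
       (\<forall>x\<in>RN N. nX x \<ge> max (wnorm q w N x) (h * supnorm N x)) \<longrightarrow>
       kolmogorov_width N nX (octa_prod N m \<Delta>) n \<ge>
         min (c q * (real n * Max ((\<lambda>s. (\<Sum>i\<in>\<Delta> s. w i) / (\<Sum>i<N. w i)) ` {1..m})) powr (-1/2)
                  * (\<Sum>i<N. w i) powr (1 / q))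
             (h / 2)))"
proof (rule exI[of _ 1], intro conjI)
  show "(1::real) > 0" by simp
  show "\<exists>c::real \<Rightarrow> real. (\<forall>q\<ge>2. c q > 0) \<and>
    (\<forall>(N::nat) (n::nat) (m::nat) (w::nat \<Rightarrow> real) (\<Delta>::nat \<Rightarrow> nat set) (q::real) (h::real)
       (nX::(nat \<Rightarrow> real) \<Rightarrow> real).
       n \<ge> 1 \<longrightarrow>
       (\<forall>i<N. w i \<ge> 0) \<longrightarrow>
       (\<Sum>i<N. w i) > 0 \<longrightarrow>
       (\<forall>s\<in>{1..m}. \<Delta> s \<subseteq> {..<N}) \<longrightarrow>
       (\<forall>s\<in>{1..m}. \<forall>t\<in>{1..m}. s \<noteq> t \<longrightarrow> \<Delta> s \<inter> \<Delta> t = {}) \<longrightarrow>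
       (\<Union>s\<in>{1..m}. \<Delta> s) = {..<N} \<longrightarrow>
       Max (w ` {..<N}) \<le> (\<Sum>i<N. w i) / (4 * real n) \<longrightarrow>
       (\<forall>s\<in>{1..m}. (\<Sum>i\<in>\<Delta> s. w i) / (\<Sum>i<N. w i) \<ge> 1 * ln (2 * real m) / real n) \<longrightarrow>
       q \<ge> 2 \<longrightarrow> h > 0 \<longrightarrow>
       is_norm_on N nX \<longrightarrow>
       (\<forall>x\<in>RN N. nX x \<ge> max (wnorm q w N x) (h * supnorm N x)) \<longrightarrow>
       kolmogorov_width N nX (octa_prod N m \<Delta>) n \<ge>
         min (c q * (real n * Max ((\<lambda>s. (\<Sum>i\<in>\<Delta> s. w i) / (\<Sum>i<N. w i)) ` {1..m})) powr (-1/2)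
                  * (\<Sum>i<N. w i) powr (1 / q))
             (h / 2))"
  proof (rule exI[of _ "\<lambda>q::real. 1/3"], intro conjI)
    show "\<forall>q\<ge>(2::real). (\<lambda>q::real. 1/3::real) q > 0" by simp
    show "\<forall>(N::nat) (n::nat) (m::nat) (w::nat \<Rightarrow> real) (\<Delta>::nat \<Rightarrow> nat set) (q::real) (h::real)
       (nX::(nat \<Rightarrow> real) \<Rightarrow> real).
       n \<ge> 1 \<longrightarrow>
       (\<forall>i<N. w i \<ge> 0) \<longrightarrow>
       (\<Sum>i<N. w i) > 0 \<longrightarrow>
       (\<forall>s\<in>{1..m}. \<Delta> s \<subseteq> {..<N}) \<longrightarrow>
       (\<forall>s\<in>{1..m}. \<forall>t\<in>{1..m}. s \<noteq> t \<longrightarrow> \<Delta> s \<inter> \<Delta> t = {}) \<longrightarrow>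
       (\<Union>s\<in>{1..m}. \<Delta> s) = {..<N} \<longrightarrow>
       Max (w ` {..<N}) \<le> (\<Sum>i<N. w i) / (4 * real n) \<longrightarrow>
       (\<forall>s\<in>{1..m}. (\<Sum>i\<in>\<Delta> s. w i) / (\<Sum>i<N. w i) \<ge> 1 * ln (2 * real m) / real n) \<longrightarrow>
       q \<ge> 2 \<longrightarrow> h > 0 \<longrightarrow>
       is_norm_on N nX \<longrightarrow>
       (\<forall>x\<in>RN N. nX x \<ge> max (wnorm q w N x) (h * supnorm N x)) \<longrightarrow>
       kolmogorov_width N nX (octa_prod N m \<Delta>) n \<ge>
         min ((\<lambda>q::real. 1/3::real) q * (real n * Max ((\<lambda>s. (\<Sum>i\<in>\<Delta> s. w i) / (\<Sum>i<N. w i)) ` {1..m})) powr (-1/2)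
                  * (\<Sum>i<N. w i) powr (1 / q))
             (h / 2)"
      using final_inst by simp
  qed
qed

end
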